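(* Let $m\ge 2$ be the number of registers of a HyperLogLog sketch into which $n$ distinct elements have been inserted, and suppose $n>4m\log_2 m$. Let $B=\log_2\frac{n}{m}$ and $\Delta=2+\log_2\log_2 m$. Then with probability at least $1-\exp\!\left(-\frac{m}{6\log_2 m}\right)$, at least $m-\frac{m}{\log_2 m}$ of the register values $M[j]$ lie in $(B-\Delta,B+\Delta)$, and hence can be represented as offsets from the base value $B$ using at most $\lceil\log_2(2+\log_2\log_2 m)\rceil+1=\log\log\log m+O(1)$ bits each.
   Context: HyperLogLog model: each of $n$ distinct elements $y_i$ is assigned a register index $f(y_i)$ uniform in $[m]=\{1,\dots,m\}$ and a value $\rho_i$ with $\Pr[\rho_i=k]=2^{-k}$, $k=1,2,\dots$ (the position of the first one-bit of a uniformly random hash value), all independent; register $M[j]$ is the maximum of $\rho_i$ over elements with $f(y_i)=j$ (0 if none), so $\Pr[M[j]\le k]=(1-\frac{1}{m2^k})^n$ for integers $k\ge0$. Convention: register values are treated as real-valued continuous random variables whose individual distribution function is $\Pr[M[j]\le t]=\Pr[M[j]<t]=(1-\frac{1}{m2^t})^n$ for real $t$. All logarithms are base 2. *)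

theory Defs
  imports "HOL-Probability.Probability"
begin

text \<open>Registers are indexed by 0..<m (instead of 1..m),
  elements by 0..<n. Each element independently gets a pair (f, rho) where
  f is uniform on {0..<m} and Pr[rho = k] = 2^(-k) for k = 1,2,...\<close>

definition rho_pmf :: "nat pmf" where
  "rho_pmf = map_pmf Suc (geometric_pmf (1/2))"

definition hll_elem_pmf :: "nat \<Rightarrow> (nat \<times> nat) pmf" where
  "hll_elem_pmf m = pair_pmf (pmf_of_set {..<m}) rho_pmf"

definition hll_pmf :: "nat \<Rightarrow> nat \<Rightarrow> (nat \<Rightarrow> nat \<times> nat) pmf" where
  "hll_pmf m n = Pi_pmf {..<n} (0, 0) (\<lambda>_. hll_elem_pmf m)"

definition hll_reg :: "nat \<Rightarrow> (nat \<Rightarrow> nat \<times> nat) \<Rightarrow> nat \<Rightarrow> nat" where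
  "hll_reg n \<omega> j = Max ({snd (\<omega> i) | i. i < n \<and> fst (\<omega> i) = j} \<union> {0})"

end

theory Submission
  imports Defs "HOL-Analysis.Harmonic_Numbers"
begin


lemma geom_tail: "measure_pmf.prob (geometric_pmf (1/2)) {k. j \<le> k} = (1/2::real)^j"
proof -
  have e: "{k. j \<le> k} = UNIV - {..<j}" by auto
  have s: "(\<Sum>k<j. (1/2::real)^k / 2) = 1 - (1/2)^j"
    by (induction j) (auto simp: field_simps)
  have "measure_pmf.prob (geometric_pmf (1/2)) (UNIV - {..<j}) = 1 - measure_pmf.prob (geometric_pmf (1/2)) {..<j}"
    using measure_pmf.prob_compl[of "{..<j}" "geometric_pmf (1/2)"] by simp
  also have "\<dots> = (1/2)^j" by (simp add: measure_measure_pmf_finite s)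
  finally show ?thesis unfolding e .
qed

lemma rho_tail: "measure_pmf.prob rho_pmf {r. Suc j \<le> r} = (1/2::real)^j"
proof -
  have "Suc -` {r. Suc j \<le> r} = {k. j \<le> k}" by auto
  thus ?thesis unfolding rho_pmf_def by (simp add: geom_tail)
qed

lemma ln2_lb: "ln (2::real) > 307/443"
  using ln_approx_bounds[of 2 3] by (simp add: eval_nat_numeral)

lemma e_lb: "exp (1::real) \<ge> 5/2"
  using e_approx_32 by (simp add: abs_if split: if_splits)



lemma rho_ge: assumes "c > 0"
  shows "measure_pmf.prob rho_pmf {r. c \<le> real r} \<le> 2 powr (1 - c)"
proof -
  define K where "K = nat \<lceil>c\<rceil> - 1"
  have c1: "1 \<le> \<lceil>c\<rceil>" using assms by (simp add: one_le_ceiling)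
  have h: "int K = \<lceil>c\<rceil> - 1" unfolding K_def using c1 by linarith
  have K: "real K = of_int \<lceil>c\<rceil> - 1"
    by (metis h of_int_of_nat_eq of_int_diff of_int_1)
  have "{r. c \<le> real r} = {r. Suc K \<le> r}"
    using assms unfolding K_def by (auto simp: ceiling_le_iff) 
  hence "measure_pmf.prob rho_pmf {r. c \<le> real r} = (1/2)^K" by (simp add: rho_tail)
  also have "\<dots> = 2 powr (- real K)" by (simp add: powr_minus powr_realpow power_divide inverse_eq_divide)
  also have "\<dots> \<le> 2 powr (1 - c)" using K le_of_int_ceiling[of c] by (intro powr_mono) auto
  finally show ?thesis .
qed

lemma rho_gt: assumes "d \<ge> 0"
  shows "measure_pmf.prob rho_pmf {r. d < real r} \<ge> 2 powr (- d)"
proof -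
  define K where "K = nat \<lfloor>d\<rfloor>"
  have K: "real K = of_int \<lfloor>d\<rfloor>" using assms unfolding K_def by simp
  have "d < real r \<longleftrightarrow> Suc K \<le> r" for r
  proof -
    have "d < real r \<longleftrightarrow> \<lfloor>d\<rfloor> < int r" using floor_less_iff[of d "int r"] by simp
    also have "\<dots> \<longleftrightarrow> Suc K \<le> r" using assms unfolding K_def by linarith
    finally show ?thesis .
  qed
  hence "{r. d < real r} = {r. Suc K \<le> r}" by auto
  hence "measure_pmf.prob rho_pmf {r. d < real r} = (1/2)^K" by (simp add: rho_tail)
  also have "\<dots> = 2 powr (- real K)" by (simp add: powr_minus powr_realpow power_divide inverse_eq_divide)
  also have "2 powr (-d) \<le> \<dots>" using K by (intro powr_mono) auto
  finally show ?thesis .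
qed

definition gS :: "real \<Rightarrow> real \<Rightarrow> nat set \<Rightarrow> nat \<times> nat \<Rightarrow> real" where
  "gS c d S x = (if c \<le> real (snd x) then 2 else 1) * (if fst x \<in> S \<and> d < real (snd x) then 0 else 1)"

lemma gS_nonneg: "gS c d S x \<ge> 0" by (simp add: gS_def)
lemma gS_le2: "gS c d S x \<le> 2" by (simp add: gS_def)

lemma elem_bound:
  assumes "S \<subseteq> {..<m}" "m > 0" "c > 0" "d \<ge> 0"
  shows "measure_pmf.expectation (hll_elem_pmf m) (gS c d S)
     \<le> 1 + 2 powr (1 - c) - real (card S) / real m * 2 powr (- d)"
proof -
  let ?M = "hll_elem_pmf m"
  define A where "A = (UNIV :: nat set) \<times> {r. c \<le> real r}"
  define B where "B = S \<times> {r. d < real r}"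
  have int: "integrable (measure_pmf ?M) (\<lambda>x. indicator A x :: real)" 
            "integrable (measure_pmf ?M) (\<lambda>x. indicator B x :: real)"
            "integrable (measure_pmf ?M) (gS c d S)"
    by (auto intro!: measure_pmf.integrable_const_bound[where B=2] simp: gS_def indicator_def)
  have pt: "gS c d S x \<le> 1 + indicator A x - indicator B x" for x
    by (cases x) (auto simp: gS_def A_def B_def indicator_def)
  have "measure_pmf.expectation ?M (gS c d S) \<le> measure_pmf.expectation ?M (\<lambda>x. 1 + indicator A x - indicator B x)"
    using int pt by (intro integral_mono) auto
  also have "\<dots> = 1 + measure_pmf.prob ?M A - measure_pmf.prob ?M B"
    using int by (simp add: Bochner_Integration.integral_diff Bochner_Integration.integral_add)
  also have "measure_pmf.prob ?M A = measure_pmf.prob rho_pmf {r. c \<le> real r}"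
    unfolding A_def hll_elem_pmf_def by (subst measure_pmf_prob_product) auto
  also have "measure_pmf.prob ?M B = (real (card S) / real m) * measure_pmf.prob rho_pmf {r. d < real r}"
  proof -
    have pS: "measure_pmf.prob (pmf_of_set {..<m}) S = real (card S) / real m"
    proof -
      have ne: "{..<m} \<noteq> {}" using assms(2) by auto
      have i: "{..<m} \<inter> S = S" using assms(1) by auto
      show ?thesis using measure_pmf_of_set[of "{..<m}" S] ne i by simp
    qed
    have cS: "countable S" using finite_subset[OF assms(1)] by (simp add: countable_finite)
    show ?thesis unfolding B_def hll_elem_pmf_def
      by (subst measure_pmf_prob_product) (auto simp: pS cS)
  qed
  finally have fin: "measure_pmf.expectation ?M (gS c d S) \<le> 1 + measure_pmf.prob rho_pmf {r. c \<le> real r}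
      - real (card S) / real m * measure_pmf.prob rho_pmf {r. d < real r}" .
  have "real (card S) / real m * 2 powr (- d) \<le> real (card S) / real m * measure_pmf.prob rho_pmf {r. d < real r}"
    by (rule mult_left_mono[OF rho_gt[OF assms(4)]]) simp
  thus ?thesis using fin rho_ge[OF assms(3)] by linarith
qed



definition Yf :: "nat \<Rightarrow> nat \<Rightarrow> real \<Rightarrow> real \<Rightarrow> (nat \<Rightarrow> nat \<times> nat) \<Rightarrow> real" where
  "Yf m n c d \<omega> = (\<Sum>S\<in>Pow {..<m}. \<Prod>i<n. gS c d S (\<omega> i))"

lemma Y_integrable: "integrable (measure_pmf (hll_pmf m n)) (Yf m n c d)"
  unfolding Yf_def hll_pmf_def
  by (intro Bochner_Integration.integrable_sum integrable_prod_Pi_pmf)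
     (auto intro!: measure_pmf.integrable_const_bound[where B=2] simp: gS_le2 gS_nonneg)

lemma Y_nonneg: "Yf m n c d \<omega> \<ge> 0"
  unfolding Yf_def by (intro sum_nonneg prod_nonneg) (auto simp: gS_nonneg)

lemma Y_bound:
  assumes "m > 0" "c > 0" "d \<ge> 0"
  shows "measure_pmf.expectation (hll_pmf m n) (Yf m n c d)
     \<le> exp (real n * 2 powr (1 - c)) * (1 + exp (- (real n * 2 powr (- d) / real m))) ^ m"
proof -
  let ?q = "2 powr (1 - c)" and ?p = "2 powr (- d)"
  have each: "measure_pmf.expectation (hll_pmf m n) (\<lambda>\<omega>. \<Prod>i<n. gS c d S (\<omega> i))
      \<le> exp (real n * ?q) * exp (- (real n * ?p / real m)) ^ card S" if S: "S \<subseteq> {..<m}" for S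
  proof -
    let ?E = "measure_pmf.expectation (hll_elem_pmf m) (gS c d S)"
    have "measure_pmf.expectation (hll_pmf m n) (\<lambda>\<omega>. \<Prod>i<n. gS c d S (\<omega> i)) = (\<Prod>i<n. ?E)"
      unfolding hll_pmf_def
      by (rule expectation_prod_Pi_pmf)
         (auto intro!: measure_pmf.integrable_const_bound[where B=2] simp: gS_le2 gS_nonneg)
    also have "\<dots> = ?E ^ n" by simp
    also have "\<dots> \<le> exp (?q - real (card S) / real m * ?p) ^ n"
    proof (rule power_mono)
      show "0 \<le> ?E" by (simp add: gS_nonneg)
      have "?E \<le> 1 + ?q - real (card S) / real m * ?p" by (rule elem_bound[OF S assms])
      also have "\<dots> \<le> exp (?q - real (card S) / real m * ?p)"
        using exp_ge_add_one_self[of "?q - real (card S) / real m * ?p"] by linarith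
      finally show "?E \<le> \<dots>" .
    qed
    also have "\<dots> = exp (real n * ?q) * exp (- (real n * ?p / real m)) ^ card S"
      by (simp add: exp_of_nat_mult[symmetric] exp_add[symmetric] algebra_simps)
    finally show ?thesis .
  qed
  have "measure_pmf.expectation (hll_pmf m n) (Yf m n c d)
      = (\<Sum>S\<in>Pow {..<m}. measure_pmf.expectation (hll_pmf m n) (\<lambda>\<omega>. \<Prod>i<n. gS c d S (\<omega> i)))"
    unfolding Yf_def hll_pmf_def
    by (intro Bochner_Integration.integral_sum integrable_prod_Pi_pmf)
       (auto intro!: measure_pmf.integrable_const_bound[where B=2] simp: gS_le2 gS_nonneg)
  also have "\<dots> \<le> (\<Sum>S\<in>Pow {..<m}. exp (real n * ?q) * exp (- (real n * ?p / real m)) ^ card S)"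
    by (intro sum_mono each) auto
  also have "\<dots> = exp (real n * ?q) * (\<Sum>S\<in>Pow {..<m}. (\<Prod>x\<in>S. exp (- (real n * ?p / real m))) * (\<Prod>x\<in>{..<m}-S. 1))"
    by (simp add: sum_distrib_left)
  also have "\<dots> = exp (real n * ?q) * (\<Prod>x\<in>{..<m}. exp (- (real n * ?p / real m)) + 1)"
    by (subst prod_add) auto
  also have "\<dots> = exp (real n * ?q) * (1 + exp (- (real n * ?p / real m))) ^ m"
    by (simp add: add.commute)
  finally show ?thesis .
qed



lemma reg_fin:
  fixes \<omega> :: "nat \<Rightarrow> nat \<times> nat" and n j :: nat
  shows "finite ({snd (\<omega> i) | i. i < n \<and> fst (\<omega> i) = j} \<union> {0})"
proof -
  have "{snd (\<omega> i) | i. i < n \<and> fst (\<omega> i) = j} \<subseteq> (\<lambda>i. snd (\<omega> i)) ` {..<n}" by auto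
  moreover have "finite ((\<lambda>i. snd (\<omega> i)) ` {..<n})" by simp
  ultimately have "finite {snd (\<omega> i) | i. i < n \<and> fst (\<omega> i) = j}"
    by (rule finite_subset)
  thus ?thesis by simp
qed

lemma rho_le_reg: "i < n \<Longrightarrow> snd (\<omega> i) \<le> hll_reg n \<omega> (fst (\<omega> i))"
  unfolding hll_reg_def by (rule Max_ge[OF reg_fin]) auto

lemma reg_witness: assumes "hll_reg n \<omega> j > 0"
  shows "\<exists>i<n. fst (\<omega> i) = j \<and> snd (\<omega> i) = hll_reg n \<omega> j"
proof -
  have "hll_reg n \<omega> j \<in> {snd (\<omega> i) | i. i < n \<and> fst (\<omega> i) = j} \<union> {0}"
    unfolding hll_reg_def by (rule Max_in[OF reg_fin]) auto
  thus ?thesis using assms by auto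
qed

lemma pointwise:
  assumes "c > 0"
  shows "(2::real) ^ card {j\<in>{..<m}. \<not> (d < real (hll_reg n \<omega> j) \<and> real (hll_reg n \<omega> j) < c)}
         \<le> Yf m n c d \<omega>"
proof -
  define M where "M = hll_reg n \<omega>"
  define Hi where "Hi = {j\<in>{..<m}. c \<le> real (M j)}"
  define Lo where "Lo = {j\<in>{..<m}. real (M j) \<le> d}"
  define Hs where "Hs = {i\<in>{..<n}. c \<le> real (snd (\<omega> i))}"
  have bad: "{j\<in>{..<m}. \<not> (d < real (M j) \<and> real (M j) < c)} \<subseteq> Hi \<union> Lo"
    unfolding Hi_def Lo_def by auto
  have "card {j\<in>{..<m}. \<not> (d < real (M j) \<and> real (M j) < c)} \<le> card (Hi \<union> Lo)"
    by (rule card_mono[OF _ bad]) (auto simp: Hi_def Lo_def)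
  also have "\<dots> \<le> card Hi + card Lo" by (rule card_Un_le)
  finally have c1: "card {j\<in>{..<m}. \<not> (d < real (M j) \<and> real (M j) < c)} \<le> card Hi + card Lo" .
  have "Hi \<subseteq> (\<lambda>i. fst (\<omega> i)) ` Hs"
  proof
    fix j assume j: "j \<in> Hi"
    hence "M j > 0" using assms unfolding Hi_def by auto
    then obtain i where "i < n" "fst (\<omega> i) = j" "snd (\<omega> i) = M j"
      using reg_witness unfolding M_def by blast
    thus "j \<in> (\<lambda>i. fst (\<omega> i)) ` Hs" using j unfolding Hs_def Hi_def by force
  qed
  hence c2: "card Hi \<le> card Hs"
  proof -
    assume sub: "Hi \<subseteq> (\<lambda>i. fst (\<omega> i)) ` Hs"
    have fin: "finite Hs" unfolding Hs_def by simp
    have "card Hi \<le> card ((\<lambda>i. fst (\<omega> i)) ` Hs)" by (rule card_mono[OF _ sub]) (simp add: fin)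
    also have "\<dots> \<le> card Hs" by (rule card_image_le[OF fin])
    finally show ?thesis .
  qed
  have "(2::real) ^ card {j\<in>{..<m}. \<not> (d < real (M j) \<and> real (M j) < c)} \<le> 2 ^ (card Hs + card Lo)"
    using c1 c2 by (intro power_increasing) auto
  also have "\<dots> = 2 ^ card Hs * 2 ^ card Lo" by (simp add: power_add)
  also have "(2::real) ^ card Hs = (\<Prod>i<n. if c \<le> real (snd (\<omega> i)) then 2 else 1)"
    by (simp add: prod.If_cases Hs_def Int_def conj_commute)
  also have "(2::real) ^ card Lo = (\<Sum>S\<in>Pow {..<m}. if S \<subseteq> Lo then 1 else 0)"
  proof -
    have "(2::real) ^ card Lo = real (card (Pow Lo))"
      by (simp add: card_Pow Lo_def)
    also have "Pow Lo = {S\<in>Pow {..<m}. S \<subseteq> Lo}" unfolding Lo_def by auto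
    also have "real (card \<dots>) = (\<Sum>S\<in>Pow {..<m}. if S \<subseteq> Lo then 1 else 0)"
      by (simp add: sum.If_cases Int_def)
    finally show ?thesis .
  qed
  also have "(\<Prod>i<n. if c \<le> real (snd (\<omega> i)) then 2 else 1) * (\<Sum>S\<in>Pow {..<m}. if S \<subseteq> Lo then 1 else 0)
      = (\<Sum>S\<in>Pow {..<m}. if S \<subseteq> Lo then (\<Prod>i<n. if c \<le> real (snd (\<omega> i)) then 2 else 1) else (0::real))"
    by (simp add: sum_distrib_left if_distrib cong: if_cong)
  also have "\<dots> \<le> Yf m n c d \<omega>"
    unfolding Yf_def
  proof (rule sum_mono)
    fix S assume "S \<in> Pow {..<m}"
    show "(if S \<subseteq> Lo then (\<Prod>i<n. if c \<le> real (snd (\<omega> i)) then 2 else 1) else 0) \<le> (\<Prod>i<n. gS c d S (\<omega> i))"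
    proof (cases "S \<subseteq> Lo")
      case True
      have "gS c d S (\<omega> i) = (if c \<le> real (snd (\<omega> i)) then 2 else 1)" if "i < n" for i
      proof -
        have "\<not> (fst (\<omega> i) \<in> S \<and> d < real (snd (\<omega> i)))"
        proof
          assume a: "fst (\<omega> i) \<in> S \<and> d < real (snd (\<omega> i))"
          hence "real (M (fst (\<omega> i))) \<le> d" using True unfolding Lo_def by auto
          moreover have "snd (\<omega> i) \<le> M (fst (\<omega> i))" using rho_le_reg[OF that] unfolding M_def .
          ultimately show False using a by linarith
        qed
        thus ?thesis by (simp add: gS_def)
      qed
      thus ?thesis using True by simp
    next
      case False
      thus ?thesis by (simp add: prod_nonneg gS_nonneg)
    qed
  qed
  finally show ?thesis unfolding M_def .
qed



lemma count_part:
  assumes "\<Delta> > 0"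
  shows "card {k :: int. B - \<Delta> < real_of_int k \<and> real_of_int k < B + \<Delta>}
           \<le> 2 ^ (nat \<lceil>log 2 \<Delta>\<rceil> + 1)"
proof -
  let ?S = "{k :: int. B - \<Delta> < real_of_int k \<and> real_of_int k < B + \<Delta>}"
  have sub: "?S \<subseteq> {\<lfloor>B - \<Delta>\<rfloor> + 1 .. \<lceil>B + \<Delta>\<rceil> - 1}"
  proof
    fix k assume "k \<in> ?S"
    hence "B - \<Delta> < k" "k < B + \<Delta>" by auto
    hence "\<lfloor>B - \<Delta>\<rfloor> < k" "k < \<lceil>B + \<Delta>\<rceil>" by linarith+
    thus "k \<in> {\<lfloor>B - \<Delta>\<rfloor> + 1 .. \<lceil>B + \<Delta>\<rceil> - 1}" by auto
  qed
  have "card ?S \<le> card {\<lfloor>B - \<Delta>\<rfloor> + 1 .. \<lceil>B + \<Delta>\<rceil> - 1}"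
    by (rule card_mono[OF _ sub]) auto
  hence c: "real (card ?S) \<le> real (nat (\<lceil>B + \<Delta>\<rceil> - 1 - \<lfloor>B - \<Delta>\<rfloor>))" by simp
  have z1: "of_int \<lceil>B + \<Delta>\<rceil> - 1 < B + \<Delta>" using ceiling_correct[of "B + \<Delta>"] by simp
  have z2: "B - \<Delta> < of_int \<lfloor>B - \<Delta>\<rfloor> + 1" using floor_correct[of "B - \<Delta>"] by simp
  have "real (nat (\<lceil>B + \<Delta>\<rceil> - 1 - \<lfloor>B - \<Delta>\<rfloor>)) < 2 * \<Delta> + 1"
  proof (cases "\<lceil>B + \<Delta>\<rceil> - 1 - \<lfloor>B - \<Delta>\<rfloor> \<ge> 0")
    case True
    hence "real (nat (\<lceil>B + \<Delta>\<rceil> - 1 - \<lfloor>B - \<Delta>\<rfloor>)) = of_int (\<lceil>B + \<Delta>\<rceil> - 1 - \<lfloor>B - \<Delta>\<rfloor>)"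
      by (simp add: of_nat_nat)
    also have "\<dots> = of_int \<lceil>B + \<Delta>\<rceil> - 1 - of_int \<lfloor>B - \<Delta>\<rfloor>" by simp
    finally show ?thesis using z1 z2 by linarith
  next
    case False
    thus ?thesis using assms by simp
  qed
  with c have c': "real (card ?S) < 2 * \<Delta> + 1" by linarith
  have "\<Delta> = 2 powr (log 2 \<Delta>)" using assms by simp
  also have "\<dots> \<le> 2 powr (real (nat \<lceil>log 2 \<Delta>\<rceil>))" by (intro powr_mono) (auto, linarith)
  also have "\<dots> = 2 ^ nat \<lceil>log 2 \<Delta>\<rceil>" by (simp add: powr_realpow)
  finally have "2 * \<Delta> \<le> real (2 ^ (nat \<lceil>log 2 \<Delta>\<rceil> + 1))" by simp
  with c' have "real (card ?S) < real (2 ^ (nat \<lceil>log 2 \<Delta>\<rceil> + 1)) + 1" by linarith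
  thus ?thesis by linarith
qed

lemma numeric:
  fixes l T m :: real
  assumes "l \<ge> 1" "T = m / l" "m > 0"
  shows "exp (T / 2) * exp (m * exp (- 4 * l)) / 2 powr T \<le> exp (- (m / (6 * l)))"
proof -
  have T0: "T > 0" using assms by simp
  have "l \<le> exp (l - 1)" using exp_ge_add_one_self[of "l - 1"] by simp
  moreover have "exp (- 3 * l) \<le> exp (-3)" using assms by simp
  ultimately have "l * exp (- 3 * l) \<le> exp (l - 1) * exp (-3)"
    by (intro mult_mono) auto
  have e1: "exp (l - 1) * exp (-3) = exp (- 4) * exp l" by (simp flip: exp_add)
  have e2: "l * exp (- 4 * l) * exp l = l * exp (- 3 * l)" by (simp add: mult.assoc flip: exp_add)
  have "l * exp (- 4 * l) * exp l = l * exp (- 3 * l)" by (rule e2)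
  also have "\<dots> \<le> exp (l - 1) * exp (-3)" by fact
  also have "\<dots> = exp (- 4) * exp l" by (rule e1)
  finally have "l * exp (- 4 * l) * exp l \<le> exp (- 4) * exp l" .
  hence a: "l * exp (- 4 * l) \<le> exp (- 4)" by (simp only: mult_le_cancel_right_pos[OF exp_gt_zero])
  have "exp (4::real) = exp 1 ^ 4" by (simp add: exp_of_nat_mult[symmetric])
  also have "\<dots> \<ge> (5/2) ^ 4" using e_lb by (intro power_mono) auto
  finally have "exp (- 4::real) \<le> 1 / 39" by (simp add: exp_minus field_simps)
  with a have "l * exp (- 4 * l) \<le> 1/39" by linarith
  hence lt: "l * exp (- 4 * l) \<le> 1/39" .
  have "m * exp (- 4 * l) = T * (l * exp (- 4 * l))" using assms by (simp add: field_simps)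
  also have "\<dots> \<le> T * (1/39)" by (rule mult_left_mono[OF lt]) (use T0 in auto)
  finally have b: "m * exp (- 4 * l) \<le> T / 39" by simp
  have "T * (307/443) \<le> T * ln 2" using ln2_lb T0 by (intro mult_left_mono) auto
  moreover have "m / (6 * l) = T / 6" using assms by simp
  ultimately have "T / 2 + m * exp (- 4 * l) - T * ln 2 \<le> - (m / (6 * l))"
    using b T0 by linarith
  hence X: "exp (T / 2 + m * exp (- 4 * l) - T * ln 2) \<le> exp (- (m / (6 * l)))" by simp
  have eq: "exp (T / 2 + m * exp (- 4 * l) - T * ln 2) = exp (T / 2) * exp (m * exp (- 4 * l)) / 2 powr T"
    by (simp add: exp_add exp_diff powr_def)
  from X show ?thesis unfolding eq .
qed



theorem theorem3p5:
  fixes m n :: nat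
  assumes "m \<ge> 2"
    and "real n > 4 * real m * log 2 (real m)"
  defines "B \<equiv> log 2 (real n / real m)"
    and "\<Delta> \<equiv> 2 + log 2 (log 2 (real m))"
  shows "measure_pmf.prob (hll_pmf m n)
           {\<omega>. real (card {j \<in> {..<m}. B - \<Delta> < real (hll_reg n \<omega> j) \<and>
                                       real (hll_reg n \<omega> j) < B + \<Delta>})
                 \<ge> real m - real m / log 2 (real m)}
         \<ge> 1 - exp (- (real m / (6 * log 2 (real m))))
       \<and> card {k :: int. B - \<Delta> < real_of_int k \<and> real_of_int k < B + \<Delta>}
           \<le> 2 ^ (nat \<lceil>log 2 (2 + log 2 (log 2 (real m)))\<rceil> + 1)"
proof -
  define l where "l = log 2 (real m)"
  define T where "T = real m / l"
  define c where "c = B + \<Delta>"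
  define d where "d = B - \<Delta>"
  have m0: "real m > 0" "m > 0" using assms(1) by auto
  have l1: "l \<ge> 1" unfolding l_def using assms(1) by simp
  have "4 * real m * l > 0" using m0 l1 by simp
  hence n0: "real n > 0" using assms(2) unfolding l_def by linarith
  have D: "2 powr \<Delta> = 4 * l" unfolding \<Delta>_def l_def using l1 unfolding l_def
    by (simp add: powr_add)
  have Bp: "2 powr B = real n / real m" unfolding B_def using n0 m0 by simp
  have D2: "\<Delta> \<ge> 2" unfolding \<Delta>_def using l1 unfolding l_def by simp
  have "4 * l < real n / real m" using assms(2) m0 unfolding l_def by (simp add: field_simps)
  hence "2 powr \<Delta> < 2 powr B" using D Bp by simp
  hence BD: "\<Delta> < B" by simp
  have c0: "c > 0" and d0: "d \<ge> 0" unfolding c_def d_def using BD D2 by auto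
  have q: "real n * 2 powr (1 - c) = T / 2"
  proof -
    have "2 powr (1 - c) = 2 / (2 powr B * 2 powr \<Delta>)"
      unfolding c_def by (simp add: powr_diff powr_add)
    thus ?thesis unfolding Bp D T_def using n0 m0 l1 by (simp add: field_simps)
  qed
  have p: "real n * 2 powr (- d) / real m = 4 * l"
  proof -
    have "2 powr (- d) = 2 powr \<Delta> / 2 powr B"
      unfolding d_def by (simp add: powr_diff powr_minus field_simps)
    thus ?thesis unfolding Bp D using n0 m0 by (simp add: field_simps)
  qed
  let ?good = "\<lambda>\<omega>. {j \<in> {..<m}. B - \<Delta> < real (hll_reg n \<omega> j) \<and> real (hll_reg n \<omega> j) < B + \<Delta>}"
  let ?bad = "\<lambda>\<omega>. {j \<in> {..<m}. \<not> (d < real (hll_reg n \<omega> j) \<and> real (hll_reg n \<omega> j) < c)}"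
  let ?A = "{\<omega>. real (card (?good \<omega>)) \<ge> real m - real m / log 2 (real m)}"
  let ?P = "measure_pmf (hll_pmf m n)"
  have key: "2 powr T \<le> Yf m n c d \<omega>" if "\<omega> \<notin> ?A" for \<omega>
  proof -
    from that have lt: "real (card (?good \<omega>)) < real m - T" unfolding T_def l_def by simp
    have "?bad \<omega> = {..<m} - ?good \<omega>" unfolding c_def d_def by auto
    hence "card (?bad \<omega>) = card ({..<m} - ?good \<omega>)" by simp
    also have "\<dots> = m - card (?good \<omega>)" by (subst card_Diff_subset) auto
    finally have "card (?bad \<omega>) = m - card (?good \<omega>)" .
    moreover have "card (?good \<omega>) \<le> m" by (rule order.trans[OF card_mono[of "{..<m}"]]) auto
    ultimately have "real (card (?bad \<omega>)) = real m - real (card (?good \<omega>))" by simp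
    hence "T < real (card (?bad \<omega>))" using lt by simp
    hence "2 powr T \<le> 2 powr real (card (?bad \<omega>))" by simp
    also have "\<dots> = 2 ^ card (?bad \<omega>)" by (simp add: powr_realpow)
    also have "\<dots> \<le> Yf m n c d \<omega>" by (rule pointwise[OF c0])
    finally show "2 powr T \<le> Yf m n c d \<omega>" .
  qed
  have sub: "UNIV - ?A \<subseteq> {\<omega> \<in> space ?P. 2 powr T \<le> Yf m n c d \<omega>}"
    using key by auto
  have "measure_pmf.prob (hll_pmf m n) (UNIV - ?A) \<le> measure ?P {\<omega> \<in> space ?P. 2 powr T \<le> Yf m n c d \<omega>}"
    by (rule measure_pmf.finite_measure_mono[OF sub]) simp
  also have "\<dots> \<le> measure_pmf.expectation (hll_pmf m n) (Yf m n c d) / 2 powr T"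
    by (rule integral_Markov_inequality_measure[where A=UNIV]) (auto simp: Y_integrable Y_nonneg)
  also have "\<dots> \<le> exp (T / 2) * (1 + exp (- (4 * l))) ^ m / 2 powr T"
    using Y_bound[OF m0(2) c0 d0, of n] unfolding q p by (simp add: divide_right_mono)
  also have "\<dots> \<le> exp (T / 2) * exp (real m * exp (- 4 * l)) / 2 powr T"
  proof -
    have "(1 + exp (- (4 * l))) ^ m \<le> exp (exp (- (4 * l))) ^ m"
    proof (rule power_mono)
      show "1 + exp (- (4 * l)) \<le> exp (exp (- (4 * l)))" by (rule exp_ge_add_one_self)
      show "0 \<le> 1 + exp (- (4 * l))" using exp_gt_zero[of "- (4 * l)"] by linarith
    qed
    also have "\<dots> = exp (real m * exp (- 4 * l))" by (simp add: exp_of_nat_mult[symmetric])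
    finally show ?thesis by (simp add: divide_right_mono)
  qed
  also have "\<dots> \<le> exp (- (real m / (6 * l)))" by (rule numeric[OF l1 T_def m0(1)])
  finally have fail: "measure_pmf.prob (hll_pmf m n) (UNIV - ?A) \<le> exp (- (real m / (6 * l)))" .
  have "measure_pmf.prob (hll_pmf m n) ?A = 1 - measure_pmf.prob (hll_pmf m n) (UNIV - ?A)"
    using measure_pmf.prob_compl[of ?A "hll_pmf m n"] by simp
  hence part1: "measure_pmf.prob (hll_pmf m n) ?A \<ge> 1 - exp (- (real m / (6 * log 2 (real m))))"
    using fail unfolding l_def by simp
  have part2: "card {k :: int. B - \<Delta> < real_of_int k \<and> real_of_int k < B + \<Delta>}
           \<le> 2 ^ (nat \<lceil>log 2 (2 + log 2 (log 2 (real m)))\<rceil> + 1)"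
    using count_part[of \<Delta> B] D2 unfolding \<Delta>_def by simp
  show ?thesis using part1 part2 by blast
qed

end
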